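(* Let $\Omega$ be a region of $\mathcal{C}^*_{n,A}$ ($n\ge1$), $\bm x\in\Omega$ with associated permutation $\pi$, and let $D_{1,\pi}(\Omega)$ be the Dyck path defined below. Then $\mathrm{level}(\Omega)=\ell(D_{1,\pi}(\Omega))$.
   Context: Let $A=\{a_1,\dots,a_m\}$ with $a_1>\dots>a_m>0$; $\mathcal{C}^*_{n,A}$ is the arrangement in $\mathbb{R}^n$ of hyperplanes $x_i-x_j=a_k$ ($i\ne j$, $1\le k\le m$); regions are connected components of the complement. The level of $X\subseteq\mathbb{R}^n$ is the smallest integer $\ell\ge0$ such that there are a linear subspace $W$ of dimension $\ell$ and $r>0$ with $X\subseteq\{\bm x:\min_{\bm y\in W}\|\bm x-\bm y\|\le r\}$. The associated permutation of $\bm x$ is the unique $\pi\in\mathfrak{S}_n$ with $x_{\pi(1)}\ge\dots\ge x_{\pi(n)}$ and $\pi^{-1}(i)<\pi^{-1}(j)$ whenever $i<j$ and $x_i=x_j$. Let $\alpha_i=\#\{j\in[n]:x_{\pi(i)}-x_{\pi(j)}>a_1\}$, so $\alpha_1\ge\dots\ge\alpha_n=0$ and $\alpha_i\le n-i$. $D_{1,\pi}(\Omega)$ is the lattice path from $(0,n)$ to $(n,0)$ with steps $E=(1,0)$, $S=(0,-1)$ given by $E^{n-\alpha_1}SE^{\alpha_1-\alpha_2}S\cdots E^{\alpha_{n-1}-\alpha_n}S$ (its steps labeled by $\pi$); it is a Dyck path. For a Dyck path $D$ from $(0,n)$ to $(n,0)$, $\ell(D)$ is the number of $k\in\{1,\dots,n\}$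 such that $D$ passes through $(k,n-k)$ (its number of prime components). *)

theory Defs
  imports "HOL-Analysis.Analysis"
begin

text \<open>Coordinates of R^n are indexed by a finite linearly ordered type 'n
  (the order plays the role of the order on indices 1..n); n = CARD('n).
  A is a finite nonempty set of positive reals; a_1 = Max A.\<close>

definition hyperplanes_CA :: "real set \<Rightarrow> (real^'n) set set" where
  "hyperplanes_CA A = {{x. x$i - x$j = a} | i j a. i \<noteq> j \<and> a \<in> A}"

definition regions_CA :: "real set \<Rightarrow> (real^'n) set set" where
  "regions_CA A = components (UNIV - \<Union>(hyperplanes_CA A))"

definition level :: "(real^'n) set \<Rightarrow> nat" where
  "level X = (LEAST l. \<exists>W r. subspace W \<and> dim W = l \<and> r > 0 \<and>
                          X \<subseteq> {x. infdist x W \<le> r})"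

definition is_assoc_perm :: "real^('n::{finite,linorder}) \<Rightarrow> (nat \<Rightarrow> 'n) \<Rightarrow> bool" where
  "is_assoc_perm x \<pi> \<longleftrightarrow> bij_betw \<pi> {1..CARD('n)} (UNIV::'n set) \<and>
     (\<forall>k\<in>{1..CARD('n)}. \<forall>l\<in>{1..CARD('n)}. k \<le> l \<longrightarrow> x$(\<pi> k) \<ge> x$(\<pi> l)) \<and>
     (\<forall>k\<in>{1..CARD('n)}. \<forall>l\<in>{1..CARD('n)}.
         \<pi> k < \<pi> l \<and> x$(\<pi> k) = x$(\<pi> l) \<longrightarrow> k < l)"

text \<open>alpha_i for i in 1..n, with the convention alpha_0 = n used in the first E-block.\<close>
definition alpha :: "real set \<Rightarrow> real^('n::finite) \<Rightarrow> (nat \<Rightarrow> 'n) \<Rightarrow> nat \<Rightarrow> nat" where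
  "alpha A x \<pi> i = (if i = 0 then CARD('n)
      else card {j\<in>{1..CARD('n)}. x$(\<pi> i) - x$(\<pi> j) > Max A})"

datatype step = E | S

definition dyck_word :: "nat \<Rightarrow> (nat \<Rightarrow> nat) \<Rightarrow> step list" where
  "dyck_word n \<alpha> = concat (map (\<lambda>i. replicate (\<alpha> (i - 1) - \<alpha> i) E @ [S]) [1..<n+1])"

fun move :: "int \<times> int \<Rightarrow> step \<Rightarrow> int \<times> int" where
  "move (a, b) E = (a + 1, b)"
| "move (a, b) S = (a, b - 1)"

fun path_points :: "int \<times> int \<Rightarrow> step list \<Rightarrow> (int \<times> int) list" where
  "path_points p [] = [p]"
| "path_points p (s # ss) = p # path_points (move p s) ss"

definition prime_components :: "nat \<Rightarrow> step list \<Rightarrow> nat" where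
  "prime_components n w = card {k\<in>{1..n}.
      (int k, int n - int k) \<in> set (path_points (0, int n) w)}"

definition D1 :: "real set \<Rightarrow> real^('n::finite) \<Rightarrow> (nat \<Rightarrow> 'n) \<Rightarrow> step list" where
  "D1 A x \<pi> = dyck_word CARD('n) (alpha A x \<pi>)"

end

theory Submission
  imports Defs
begin


lemma path_points_hd: "p \<in> set (path_points p w)"
  by (cases w) auto

lemma path_points_append:
  "set (path_points p (w1 @ w2)) = set (path_points p w1) \<union> set (path_points (foldl move p w1) w2)"
  by (induction w1 arbitrary: p) (auto simp: path_points_hd)

lemma foldl_rep_E: "foldl move (a,b) (replicate m E) = (a + int m, b)"
  by (induction m arbitrary: a) auto

lemma path_rep_E: "set (path_points (a,b) (replicate m E)) = {(a + t, b) | t. 0 \<le> t \<and> t \<le> int m}"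
proof (induction m arbitrary: a)
  case 0
  then show ?case by auto
next
  case (Suc m)
  have "set (path_points (a,b) (replicate (Suc m) E)) = insert (a,b) {(a + 1 + t, b) | t. 0 \<le> t \<and> t \<le> int m}"
    using Suc by simp
  also have "\<dots> = {(a + t, b) | t. 0 \<le> t \<and> t \<le> int (Suc m)}"
  proof (intro equalityI subsetI)
    fix p assume "p \<in> {(a + t, b) | t. 0 \<le> t \<and> t \<le> int (Suc m)}"
    then obtain t where "p = (a+t,b)" "0 \<le> t" "t \<le> int (Suc m)" by auto
    then show "p \<in> insert (a,b) {(a + 1 + t, b) | t. 0 \<le> t \<and> t \<le> int m}"
      by (cases "t = 0") (auto intro!: exI[of _ "t - 1"])
  qed force
  finally show ?case .
qed

lemma path_group:
  "set (path_points (a,b) (replicate m E @ [S])) = {(a + t, b) | t. 0 \<le> t \<and> t \<le> int m} \<union> {(a + int m, b - 1)}"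
  "foldl move (a,b) (replicate m E @ [S]) = (a + int m, b - 1)"
  by (auto simp: path_points_append path_rep_E foldl_rep_E)

lemma dyck_path_set:
  fixes \<alpha> :: "nat \<Rightarrow> nat" and n :: nat
  assumes a0: "\<alpha> 0 = n" and mono: "\<forall>i\<in>{1..n}. \<alpha> i \<le> \<alpha> (i-1)"
  shows "m \<le> n \<Longrightarrow> foldl move (0, int n) (concat (map (\<lambda>i. replicate (\<alpha> (i - 1) - \<alpha> i) E @ [S]) [1..<m+1])) = (int n - int (\<alpha> m), int n - int m)
     \<and> set (path_points (0, int n) (concat (map (\<lambda>i. replicate (\<alpha> (i - 1) - \<alpha> i) E @ [S]) [1..<m+1]))) = {(0, int n)} \<union> {(X,Y). \<exists>i\<in>{1..m}. (Y = int n - int i + 1 \<and> int n - int (\<alpha> (i-1)) \<le> X \<and> X \<le> int n - int (\<alpha> i)) \<or> (X = int n - int (\<alpha> i) \<and> Y = int n - int i)}"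
proof (induction m)
  case 0
  then show ?case using a0 by simp
next
  case (Suc m)
  define g where "g = (\<lambda>i. replicate (\<alpha> (i - 1) - \<alpha> i) E @ [S])"
  define C where "C = (\<lambda>i X Y. (Y = int n - int i + 1 \<and> int n - int (\<alpha> (i-1)) \<le> X \<and> X \<le> int n - int (\<alpha> i)) \<or> (X = int n - int (\<alpha> i) \<and> Y = int n - int i))"
  define R where "R = (\<lambda>m. {(X,Y). \<exists>i\<in>{1..m}. C i X Y})"
  have IH: "foldl move (0, int n) (concat (map g [1..<m+1])) = (int n - int (\<alpha> m), int n - int m)"
     "set (path_points (0, int n) (concat (map g [1..<m+1]))) = {(0, int n)} \<union> R m"
    using Suc by (auto simp: g_def R_def C_def)
  have le: "\<alpha> (Suc m) \<le> \<alpha> m" using mono Suc.prems by force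
  have eq: "concat (map g [1..<Suc m+1]) = concat (map g [1..<m+1]) @ g (Suc m)" by simp
  have gS: "g (Suc m) = replicate (\<alpha> m - \<alpha> (Suc m)) E @ [S]" by (simp add: g_def)
  have f: "foldl move (0, int n) (concat (map g [1..<Suc m+1])) = (int n - int (\<alpha> (Suc m)), int n - int (Suc m))"
    unfolding eq foldl_append IH gS using le by (simp add: foldl_rep_E of_nat_diff)
  have R1: "R (Suc m) = R m \<union> {(X,Y). C (Suc m) X Y}"
    unfolding R_def by (auto simp: atLeastAtMostSuc_conv)
  have R2: "{(X,Y). C (Suc m) X Y} = {(int n - int (\<alpha> m) + t, int n - int m) | t. 0 \<le> t \<and> t \<le> int (\<alpha> m - \<alpha> (Suc m))} \<union> {(int n - int (\<alpha> m) + int (\<alpha> m - \<alpha> (Suc m)), int n - int m - 1)}"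
  proof (intro equalityI subsetI)
    fix p assume "p \<in> {(X,Y). C (Suc m) X Y}"
    then obtain X Y where p: "p = (X,Y)" "C (Suc m) X Y" by auto
    show "p \<in> {(int n - int (\<alpha> m) + t, int n - int m) | t. 0 \<le> t \<and> t \<le> int (\<alpha> m - \<alpha> (Suc m))} \<union> {(int n - int (\<alpha> m) + int (\<alpha> m - \<alpha> (Suc m)), int n - int m - 1)}"
      using p le unfolding C_def
      by (auto simp: of_nat_diff intro!: exI[of _ "X - (int n - int (\<alpha> m))"])
  next
    fix p assume "p \<in> {(int n - int (\<alpha> m) + t, int n - int m) | t. 0 \<le> t \<and> t \<le> int (\<alpha> m - \<alpha> (Suc m))} \<union> {(int n - int (\<alpha> m) + int (\<alpha> m - \<alpha> (Suc m)), int n - int m - 1)}"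
    then show "p \<in> {(X,Y). C (Suc m) X Y}" using le unfolding C_def by (auto simp: of_nat_diff)
  qed
  have "R (Suc m) = R m \<union> ({(int n - int (\<alpha> m) + t, int n - int m) | t. 0 \<le> t \<and> t \<le> int (\<alpha> m - \<alpha> (Suc m))} \<union> {(int n - int (\<alpha> m) + int (\<alpha> m - \<alpha> (Suc m)), int n - int m - 1)})"
    using R1 R2 by simp
  then have s: "set (path_points (0, int n) (concat (map g [1..<Suc m+1]))) = {(0, int n)} \<union> R (Suc m)"
    unfolding eq path_points_append[of _ "concat (map g [1..<m+1])"] IH gS path_group by auto
  show ?case using f s by (simp add: g_def R_def C_def)
qed

lemma prime_components_char:
  fixes \<alpha> :: "nat \<Rightarrow> nat"
  assumes a0: "\<alpha> 0 = n" and mono: "\<forall>i\<in>{1..n}. \<alpha> i \<le> \<alpha> (i-1)"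
    and bnd: "\<forall>i\<in>{1..n}. \<alpha> i \<le> n - i"
  shows "prime_components n (dyck_word n \<alpha>) = card {k\<in>{1..n}. \<alpha> k = n - k}"
proof -
  have st: "set (path_points (0, int n) (dyck_word n \<alpha>)) = {(0, int n)} \<union> {(X,Y). \<exists>i\<in>{1..n}. (Y = int n - int i + 1 \<and> int n - int (\<alpha> (i-1)) \<le> X \<and> X \<le> int n - int (\<alpha> i)) \<or> (X = int n - int (\<alpha> i) \<and> Y = int n - int i)}"
    using dyck_path_set[OF a0 mono, of n] by (simp add: dyck_word_def)
  have "{k\<in>{1..n}. (int k, int n - int k) \<in> set (path_points (0, int n) (dyck_word n \<alpha>))} = {k\<in>{1..n}. \<alpha> k = n - k}"
  proof (intro set_eqI iffI)
    fix k assume "k \<in> {k\<in>{1..n}. (int k, int n - int k) \<in> set (path_points (0, int n) (dyck_word n \<alpha>))}"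
    then have k: "k \<in> {1..n}" and "(int k, int n - int k) \<in> set (path_points (0, int n) (dyck_word n \<alpha>))" by auto
    moreover have "(int k, int n - int k) \<noteq> (0, int n)" using k by auto
    ultimately obtain i where i: "i \<in> {1..n}" and
      c: "(int n - int k = int n - int i + 1 \<and> int n - int (\<alpha> (i-1)) \<le> int k \<and> int k \<le> int n - int (\<alpha> i)) \<or> (int k = int n - int (\<alpha> i) \<and> int n - int k = int n - int i)"
      unfolding st by blast
    have bk: "\<alpha> k \<le> n - k" using bnd k by auto
    show "k \<in> {k\<in>{1..n}. \<alpha> k = n - k}"
    proof (cases "int n - int k = int n - int i + 1 \<and> int n - int (\<alpha> (i-1)) \<le> int k \<and> int k \<le> int n - int (\<alpha> i)")
      case True
      then have "i - 1 = k" by auto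
      then show ?thesis using True k bk by auto
    next
      case False
      then have "int k = int n - int (\<alpha> i) \<and> int n - int k = int n - int i" using c by auto
      then show ?thesis using k by auto
    qed
  next
    fix k assume "k \<in> {k\<in>{1..n}. \<alpha> k = n - k}"
    then have k: "k \<in> {1..n}" "\<alpha> k = n - k" by auto
    then have "(int k, int n - int k) \<in> {(X,Y). \<exists>i\<in>{1..n}. (Y = int n - int i + 1 \<and> int n - int (\<alpha> (i-1)) \<le> X \<and> X \<le> int n - int (\<alpha> i)) \<or> (X = int n - int (\<alpha> i) \<and> Y = int n - int i)}"
      by (auto intro!: bexI[of _ k] simp: of_nat_diff)
    then show "k \<in> {k\<in>{1..n}. (int k, int n - int k) \<in> set (path_points (0, int n) (dyck_word n \<alpha>))}"
      unfolding st using k by auto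
  qed
  then show ?thesis unfolding prime_components_def by simp
qed



locale reg_setup =
  fixes A :: "real set" and \<Omega> :: "(real, 'n::{finite,linorder}) vec set"
    and x :: "(real, 'n) vec" and \<pi> :: "nat \<Rightarrow> 'n"
  assumes finA: "finite A" and neA: "A \<noteq> {}" and posA: "\<forall>a\<in>A. a > 0"
    and reg: "\<Omega> \<in> regions_CA A" and xin: "x \<in> \<Omega>" and perm: "is_assoc_perm x \<pi>"
begin

definition "a1 = Max A"
definition "\<sigma> = inv_into {1..CARD('n)} \<pi>"
definition "K = {k\<in>{1..CARD('n)}. k = CARD('n) \<or> x$(\<pi> k) - x$(\<pi> (Suc k)) > a1}"
definition "u b = (\<chi> i. if \<sigma> i \<le> b then (1::real) else 0)"

lemma a1: "a1 \<in> A" "a1 > 0" "\<And>a. a \<in> A \<Longrightarrow> a \<le> a1"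
  using finA neA posA by (auto simp: a1_def)

lemma bij: "bij_betw \<pi> {1..CARD('n)} UNIV"
  using perm by (simp add: is_assoc_perm_def)

lemma sig: "\<sigma> i \<in> {1..CARD('n)}" "\<pi> (\<sigma> i) = i"
proof -
  have "bij_betw \<sigma> UNIV {1..CARD('n)}" unfolding \<sigma>_def by (rule bij_betw_inv_into[OF bij])
  then show "\<sigma> i \<in> {1..CARD('n)}" by (meson UNIV_I bij_betwE)
  show "\<pi> (\<sigma> i) = i" unfolding \<sigma>_def by (rule bij_betw_inv_into_right[OF bij]) simp
qed

lemma sig2: "k \<in> {1..CARD('n)} \<Longrightarrow> \<sigma> (\<pi> k) = k"
  using bij_betw_inv_into_left[OF bij] by (simp add: \<sigma>_def)

lemma pi_inj: "k \<in> {1..CARD('n)} \<Longrightarrow> l \<in> {1..CARD('n)} \<Longrightarrow> \<pi> k = \<pi> l \<Longrightarrow> k = l"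
  using bij unfolding bij_betw_def inj_on_def by blast

lemma sorted: "k \<in> {1..CARD('n)} \<Longrightarrow> l \<in> {1..CARD('n)} \<Longrightarrow> k \<le> l \<Longrightarrow> x$(\<pi> l) \<le> x$(\<pi> k)"
  using perm unfolding is_assoc_perm_def by blast

lemma compl_iff: "z \<in> UNIV - \<Union>(hyperplanes_CA A) \<longleftrightarrow> (\<forall>i j a. i \<noteq> j \<longrightarrow> a \<in> A \<longrightarrow> z$i - z$j \<noteq> a)"
  unfolding hyperplanes_CA_def by auto

lemma reg': "\<Omega> \<in> components (UNIV - \<Union>(hyperplanes_CA A))"
  using reg by (simp add: regions_CA_def)

lemma compl: "y \<in> \<Omega> \<Longrightarrow> i \<noteq> j \<Longrightarrow> a \<in> A \<Longrightarrow> y$i - y$j \<noteq> a"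
  using in_components_subset[OF reg'] compl_iff by blast

lemma conn: "connected \<Omega>"
  using in_components_connected[OF reg'] .

lemma u_comp: "k \<in> {1..CARD('n)} \<Longrightarrow> u b $ \<pi> k = (if k \<le> b then 1 else 0)"
  by (simp add: u_def sig2)

lemma K_sub: "K \<subseteq> {1..CARD('n)}" by (auto simp: K_def)

lemma N_in_K: "CARD('n) \<in> K"
proof -
  have "CARD('n) \<ge> 1" by (simp add: Suc_leI)
  then show ?thesis by (auto simp: K_def)
qed

lemma indep: assumes "B \<subseteq> {1..CARD('n)}" shows "independent (u ` B)" "inj_on u B"
proof -
  have "independent (u ` (B \<inter> {..<m}))" for m
  proof (induction m)
    case 0
    then show ?case by (simp add: independent_empty)
  next
    case (Suc m)
    show ?case
    proof (cases "m \<in> B")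
      case False
      then have "B \<inter> {..<Suc m} = B \<inter> {..<m}" by (auto simp: less_Suc_eq)
      then show ?thesis using Suc by simp
    next
      case True
      then have m: "m \<in> {1..CARD('n)}" using assms by auto
      have eq: "u ` (B \<inter> {..<Suc m}) = insert (u m) (u ` (B \<inter> {..<m}))" using True by (auto simp: less_Suc_eq)
      have sub: "subspace {v::(real,'n) vec. v $ \<pi> m = 0}" by (auto simp: subspace_def)
      have "u ` (B \<inter> {..<m}) \<subseteq> {v. v $ \<pi> m = 0}" using m by (auto simp: u_comp)
      then have "span (u ` (B \<inter> {..<m})) \<subseteq> {v. v $ \<pi> m = 0}" using sub by (rule span_minimal)
      moreover have "u m $ \<pi> m = 1" using m by (simp add: u_comp)
      ultimately have "u m \<notin> span (u ` (B \<inter> {..<m}))" by auto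
      then show ?thesis unfolding eq using Suc by (rule independent_insertI)
    qed
  qed
  moreover have "B \<inter> {..<Suc CARD('n)} = B" using assms by auto
  ultimately show "independent (u ` B)" by metis
  show "inj_on u B"
  proof
    fix b b' assume b: "b \<in> B" "b' \<in> B" "u b = u b'"
    show "b = b'"
    proof (rule ccontr)
      assume "b \<noteq> b'"
      then consider "b < b'" | "b' < b" by linarith
      then show False
      proof cases
        case 1
        then have "u b $ \<pi> b' = 0" "u b' $ \<pi> b' = 1" using b(1,2) assms by (auto simp: u_comp)
        then show False using b by simp
      next
        case 2
        then have "u b' $ \<pi> b = 0" "u b $ \<pi> b = 1" using b(1,2) assms by (auto simp: u_comp)
        then show False using b by simp
      qed
    qed
  qed
qed

lemma ray: assumes b: "b \<in> K" and t: "t \<ge> 0" shows "x + t *\<^sub>R u b \<in> \<Omega>"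
proof -
  define T where "T = (\<lambda>s. x + s *\<^sub>R u b) ` {0..t}"
  have cT: "connected T" unfolding T_def
    by (intro connected_continuous_image continuous_intros connected_Icc)
  have bN: "b \<in> {1..CARD('n)}" using b K_sub by auto
  have TS: "T \<subseteq> UNIV - \<Union>(hyperplanes_CA A)"
  proof
    fix z assume "z \<in> T"
    then obtain s where s: "s \<ge> 0" "z = x + s *\<^sub>R u b" using T_def by auto
    show "z \<in> UNIV - \<Union>(hyperplanes_CA A)" unfolding compl_iff
    proof (intro allI impI)
      fix i j :: 'n and a :: real assume ij: "i \<noteq> j" and a: "a \<in> A"
      have zi: "z$i - z$j = x$i - x$j + s * (u b $ i - u b $ j)" using s by (simp add: algebra_simps)
      have xne: "x$i - x$j \<noteq> a" using compl[OF xin ij a] .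
      have si: "\<sigma> i \<in> {1..CARD('n)}" "\<sigma> j \<in> {1..CARD('n)}" using sig by auto
      have xi: "x$i = x$(\<pi> (\<sigma> i))" "x$j = x$(\<pi> (\<sigma> j))" using sig by auto
      consider "\<sigma> i \<le> b \<and> \<sigma> j \<le> b" | "\<sigma> i > b \<and> \<sigma> j > b" | "\<sigma> i \<le> b \<and> \<sigma> j > b" | "\<sigma> j \<le> b \<and> \<sigma> i > b" by linarith
      then show "z$i - z$j \<noteq> a"
      proof cases
        case 1 then show ?thesis using zi xne by (simp add: u_def)
      next
        case 2 then show ?thesis using zi xne by (simp add: u_def)
      next
        case 3
        then have bl: "b < CARD('n)" using si by auto
        then have gap: "x$(\<pi> b) - x$(\<pi> (Suc b)) > a1" using b by (auto simp: K_def)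
        have "x$(\<pi> (\<sigma> i)) \<ge> x$(\<pi> b)" using sorted[of "\<sigma> i" b] si bN 3 by auto
        moreover have "x$(\<pi> (\<sigma> j)) \<le> x$(\<pi> (Suc b))" using sorted[of "Suc b" "\<sigma> j"] si bN 3 bl by auto
        ultimately have "x$i - x$j > a" using gap xi a1(3)[OF a] by linarith
        moreover have "u b $ i - u b $ j = 1" using 3 by (simp add: u_def)
        ultimately show ?thesis using zi s by auto
      next
        case 4
        then have bl: "b < CARD('n)" using si by auto
        then have gap: "x$(\<pi> b) - x$(\<pi> (Suc b)) > a1" using b by (auto simp: K_def)
        have "x$(\<pi> (\<sigma> j)) \<ge> x$(\<pi> b)" using sorted[of "\<sigma> j" b] si bN 4 by auto
        moreover have "x$(\<pi> (\<sigma> i)) \<le> x$(\<pi> (Suc b))" using sorted[of "Suc b" "\<sigma> i"] si bN 4 bl by auto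
        ultimately have "x$i - x$j < 0" using gap xi a1(2) by linarith
        moreover have "u b $ i - u b $ j = -1" using 4 by (simp add: u_def)
        ultimately show ?thesis using zi s a posA by auto
      qed
    qed
  qed
  have "x \<in> T" unfolding T_def using t by force
  then have "T \<subseteq> \<Omega>" using components_maximal[OF reg' cT TS] xin by blast
  moreover have "x + t *\<^sub>R u b \<in> T" unfolding T_def using t by auto
  ultimately show ?thesis by auto
qed

lemma lower: assumes W: "subspace W" and r: "r > 0" and cov: "\<Omega> \<subseteq> {y. infdist y W \<le> r}"
  shows "card K \<le> dim W"
proof -
  have clW: "closed W" using closed_subspace[OF W] .
  have neW: "W \<noteq> {}" using subspace_0[OF W] by auto
  have uW: "u b \<in> W" if b: "b \<in> K" for b
  proof -
    have "u b \<in> closure W"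
      unfolding closure_approachable
    proof (intro allI impI)
      fix e :: real assume e: "e > 0"
      define t where "t = (r + norm x + 1) / e"
      have t: "t > 0" using e r by (simp add: t_def add_pos_nonneg)
      define y where "y = x + t *\<^sub>R u b"
      have "y \<in> \<Omega>" using ray[OF b] t by (simp add: y_def)
      then have iy: "infdist y W \<le> r" using cov by auto
      obtain w where w: "w \<in> W" "infdist y W = dist y w"
        using infdist_attains_inf[OF clW neW, of y] by blast
      have "(1/t) *\<^sub>R w \<in> W" using W w(1) by (simp add: subspace_scale)
      moreover have "dist ((1/t) *\<^sub>R w) (u b) < e"
      proof -
        have "(1/t) *\<^sub>R w - u b = (1/t) *\<^sub>R ((w - y) + x)"
          using t by (simp add: y_def algebra_simps)
        then have "dist ((1/t) *\<^sub>R w) (u b) = (1/t) * norm ((w - y) + x)"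
          using t by (simp add: dist_norm)
        also have "\<dots> \<le> (1/t) * (r + norm x)"
        proof -
          have "norm ((w - y) + x) \<le> norm (w - y) + norm x" by (rule norm_triangle_ineq)
          also have "norm (w - y) = dist y w" by (simp add: dist_norm norm_minus_commute)
          finally have "norm ((w - y) + x) \<le> r + norm x" using iy w by linarith
          then show ?thesis using t by (simp add: divide_right_mono)
        qed
        also have "\<dots> = e * (r + norm x) / (r + norm x + 1)"
          using e by (simp add: t_def)
        also have "\<dots> < e"
        proof -
          have p: "r + norm x + 1 > 0" using r by (simp add: add_pos_nonneg)
          have "e * (r + norm x) < e * (r + norm x + 1)" using e by simp
          then show ?thesis using p by (simp add: divide_less_eq)
        qed
        finally show ?thesis .
      qed
      ultimately show "\<exists>y\<in>W. dist y (u b) < e" by blast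
    qed
    then show ?thesis using clW by simp
  qed
  have "card (u ` K) \<le> dim W"
    using independent_card_le_dim[of "u ` K" W] uW indep(1)[OF K_sub] by auto
  moreover have "card (u ` K) = card K" using card_image[OF indep(2)[OF K_sub]] .
  ultimately show ?thesis by simp
qed

lemma transfer: assumes y: "y \<in> \<Omega>" and ij: "i \<noteq> j" and lt: "x$i - x$j < a1" shows "y$i - y$j < a1"
proof (rule ccontr)
  assume "\<not> y$i - y$j < a1"
  then have le: "inner (axis i 1 - axis j 1) y \<ge> a1" "inner (axis i 1 - axis j 1) x \<le> a1"
    using lt by (auto simp: inner_diff_left inner_commute[of "axis _ _"] cart_eq_inner_axis[symmetric])
  obtain z where z: "z \<in> \<Omega>" "inner (axis i 1 - axis j 1) z = a1"
    using connected_ivt_hyperplane[OF conn xin y le(2) le(1)] by blast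
  then have "z$i - z$j = a1" by (simp add: inner_diff_left inner_commute[of "axis _ _"] cart_eq_inner_axis[symmetric])
  then show False using compl[OF z(1) ij a1(1)] by simp
qed

lemma small: assumes y: "y \<in> \<Omega>" and j: "j \<in> {1..CARD('n)}" "j \<notin> K"
  shows "j < CARD('n)" "\<bar>y$(\<pi> j) - y$(\<pi> (Suc j))\<bar> < a1"
proof -
  show jl: "j < CARD('n)" using j N_in_K by (cases "j = CARD('n)") auto
  have ne: "\<pi> j \<noteq> \<pi> (Suc j)" using pi_inj[of j "Suc j"] j jl by auto
  have "\<not> x$(\<pi> j) - x$(\<pi> (Suc j)) > a1" using j jl by (auto simp: K_def)
  moreover have "x$(\<pi> j) - x$(\<pi> (Suc j)) \<noteq> a1" using compl[OF xin ne a1(1)] .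
  ultimately have 1: "x$(\<pi> j) - x$(\<pi> (Suc j)) < a1" by linarith
  have "x$(\<pi> (Suc j)) \<le> x$(\<pi> j)" using sorted[of j "Suc j"] j jl by auto
  then have 2: "x$(\<pi> (Suc j)) - x$(\<pi> j) < a1" using a1(2) by linarith
  show "\<bar>y$(\<pi> j) - y$(\<pi> (Suc j))\<bar> < a1"
    using transfer[OF y ne 1] transfer[OF y ne[symmetric] 2] by linarith
qed

lemma upper: "\<exists>W r. subspace W \<and> dim W = card K \<and> r > 0 \<and> \<Omega> \<subseteq> {y. infdist y W \<le> r}"
proof (intro exI conjI)
  show "subspace (span (u ` K))" by (rule subspace_span)
  show "dim (span (u ` K)) = card K"
    using dim_span_eq_card_independent[OF indep(1)[OF K_sub]] card_image[OF indep(2)[OF K_sub]] by simp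
  show "real CARD('n) * (real CARD('n) * a1) + 1 > 0" using a1(2) by (simp add: add_nonneg_pos)
  show "\<Omega> \<subseteq> {y. infdist y (span (u ` K)) \<le> real CARD('n) * (real CARD('n) * a1) + 1}"
  proof
    fix y assume y: "y \<in> \<Omega>"
    define f where "f = (\<lambda>j. y$(\<pi> j))"
    define d where "d = (\<lambda>b. if b < CARD('n) then f b - f (Suc b) else f (CARD('n)))"
    define w where "w = (\<Sum>b\<in>K. d b *\<^sub>R u b)"
    have wS: "w \<in> span (u ` K)" unfolding w_def
      by (intro span_sum span_scale span_base) auto
    have comp: "\<bar>(y - w)$(\<pi> k)\<bar> \<le> real CARD('n) * a1" if k: "k \<in> {1..CARD('n)}" for k
    proof -
      have "w$(\<pi> k) = (\<Sum>b\<in>K. d b * (if k \<le> b then 1 else 0))"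
        using k by (simp add: w_def u_comp)
      also have "\<dots> = (\<Sum>b\<in>K. if k \<le> b then d b else 0)"
        by (intro sum.cong) auto
      also have "\<dots> = (\<Sum>b\<in>{b\<in>K. k \<le> b}. d b)"
        using finite_subset[OF K_sub] by (simp add: sum.inter_filter)
      finally have wk: "w$(\<pi> k) = (\<Sum>b\<in>{b\<in>K. k \<le> b}. d b)" .
      have tel: "(\<Sum>b\<in>{k..<CARD('n)}. f b - f (Suc b)) = f k - f (CARD('n))"
      proof -
        have "(\<Sum>b\<in>{k..<CARD('n)}. f (Suc b) - f b) = f (CARD('n)) - f k"
          using k by (intro sum_Suc_diff') auto
        then show ?thesis by (simp add: sum_subtractf)
      qed
      have fk: "f k = (\<Sum>b\<in>{k..CARD('n)}. d b)"
      proof -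
        have "{k..CARD('n)} = insert (CARD('n)) {k..<CARD('n)}" using k by auto
        then have "(\<Sum>b\<in>{k..CARD('n)}. d b) = d (CARD('n)) + (\<Sum>b\<in>{k..<CARD('n)}. d b)" by simp
        also have "(\<Sum>b\<in>{k..<CARD('n)}. d b) = (\<Sum>b\<in>{k..<CARD('n)}. f b - f (Suc b))"
          by (intro sum.cong) (auto simp: d_def)
        finally show ?thesis using tel by (simp add: d_def)
      qed
      have subs: "{b\<in>K. k \<le> b} \<subseteq> {k..CARD('n)}" using K_sub by auto
      have "(y - w)$(\<pi> k) = (\<Sum>b\<in>{k..CARD('n)} - {b\<in>K. k \<le> b}. d b)"
        using fk wk sum_diff[OF _ subs, of d] by (simp add: f_def)
      also have "\<bar>\<dots>\<bar> \<le> (\<Sum>b\<in>{k..CARD('n)} - {b\<in>K. k \<le> b}. \<bar>d b\<bar>)" by (rule sum_abs)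
      also have "\<dots> \<le> (\<Sum>b\<in>{k..CARD('n)} - {b\<in>K. k \<le> b}. a1)"
      proof (intro sum_mono)
        fix b assume b: "b \<in> {k..CARD('n)} - {b\<in>K. k \<le> b}"
        then have b1: "b \<in> {1..CARD('n)}" "b \<notin> K" using k by auto
        show "\<bar>d b\<bar> \<le> a1" using small[OF y b1] by (simp add: d_def f_def)
      qed
      also have "\<dots> = real (card ({k..CARD('n)} - {b\<in>K. k \<le> b})) * a1" by simp
      also have "\<dots> \<le> real CARD('n) * a1"
      proof -
        have "card ({k..CARD('n)} - {b\<in>K. k \<le> b}) \<le> card {k..CARD('n)}" by (rule card_mono) auto
        also have "\<dots> \<le> CARD('n)" using k by auto
        finally show ?thesis using a1(2) by (simp add: mult_right_mono)
      qed
      finally show ?thesis .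
    qed
    have "norm (y - w) \<le> (\<Sum>i\<in>UNIV. \<bar>(y - w)$i\<bar>)" by (rule norm_le_l1_cart)
    also have "\<dots> \<le> (\<Sum>i\<in>(UNIV::'n set). real CARD('n) * a1)"
    proof (intro sum_mono)
      fix i :: 'n
      show "\<bar>(y - w)$i\<bar> \<le> real CARD('n) * a1" using comp[OF sig(1)[of i]] sig(2)[of i] by simp
    qed
    also have "\<dots> = real CARD('n) * (real CARD('n) * a1)" by simp
    finally have "infdist y (span (u ` K)) \<le> real CARD('n) * (real CARD('n) * a1)"
      using infdist_le[OF wS, of y] by (simp add: dist_norm)
    then show "y \<in> {y. infdist y (span (u ` K)) \<le> real CARD('n) * (real CARD('n) * a1) + 1}" by simp
  qed
qed

lemma level_eq: "level \<Omega> = card K"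
  unfolding level_def
proof (rule Least_equality)
  show "\<exists>W r. subspace W \<and> dim W = card K \<and> r > 0 \<and> \<Omega> \<subseteq> {x. infdist x W \<le> r}"
    using upper by blast
next
  fix l assume "\<exists>W r. subspace W \<and> dim W = l \<and> r > 0 \<and> \<Omega> \<subseteq> {x. infdist x W \<le> r}"
  then obtain W r where "subspace W" "dim W = l" "r > 0" "\<Omega> \<subseteq> {x. infdist x W \<le> r}" by blast
  then show "card K \<le> l" using lower by blast
qed

lemma alpha_k: "k \<ge> 1 \<Longrightarrow> alpha A x \<pi> k = card {j\<in>{1..CARD('n)}. x$(\<pi> k) - x$(\<pi> j) > a1}"
  by (simp add: alpha_def a1_def)

lemma alpha_sub: assumes k: "k \<in> {1..CARD('n)}"
  shows "{j\<in>{1..CARD('n)}. x$(\<pi> k) - x$(\<pi> j) > a1} \<subseteq> {Suc k..CARD('n)}"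
proof
  fix j assume "j \<in> {j\<in>{1..CARD('n)}. x$(\<pi> k) - x$(\<pi> j) > a1}"
  then have j: "j \<in> {1..CARD('n)}" and g: "x$(\<pi> k) - x$(\<pi> j) > a1" by simp_all
  show "j \<in> {Suc k..CARD('n)}"
  proof (rule ccontr)
    assume "j \<notin> {Suc k..CARD('n)}"
    then have "j \<le> k" using j by simp
    then have "x$(\<pi> k) \<le> x$(\<pi> j)" using sorted[of j k] j k by blast
    then show False using g a1(2) by linarith
  qed
qed

lemma alpha_bnd: "\<forall>i\<in>{1..CARD('n)}. alpha A x \<pi> i \<le> CARD('n) - i"
proof
  fix i assume i: "i \<in> {1..CARD('n)}"
  have "alpha A x \<pi> i \<le> card {Suc i..CARD('n)}"
    using i alpha_k[of i] card_mono[OF _ alpha_sub[OF i]] by auto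
  then show "alpha A x \<pi> i \<le> CARD('n) - i" by simp
qed

lemma alpha_mono: "\<forall>i\<in>{1..CARD('n)}. alpha A x \<pi> i \<le> alpha A x \<pi> (i-1)"
proof
  fix i assume i: "i \<in> {1..CARD('n)}"
  show "alpha A x \<pi> i \<le> alpha A x \<pi> (i-1)"
  proof (cases "i = 1")
    case True
    have "CARD('n) \<ge> 1" by (simp add: Suc_leI)
    then have "alpha A x \<pi> 1 \<le> CARD('n) - 1" using alpha_bnd by auto
    then show ?thesis using True by (simp add: alpha_def[of _ _ _ 0])
  next
    case False
    then have i1: "i - 1 \<in> {1..CARD('n)}" using i by auto
    have "{j\<in>{1..CARD('n)}. x$(\<pi> i) - x$(\<pi> j) > a1} \<subseteq> {j\<in>{1..CARD('n)}. x$(\<pi> (i-1)) - x$(\<pi> j) > a1}"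
      using sorted[of "i-1" i] i i1 by auto
    then show ?thesis using i i1 alpha_k[of i] alpha_k[of "i-1"] by (simp add: card_mono)
  qed
qed

lemma alpha_K: "{k\<in>{1..CARD('n)}. alpha A x \<pi> k = CARD('n) - k} = K"
proof (intro set_eqI iffI)
  fix k assume kk: "k \<in> {k\<in>{1..CARD('n)}. alpha A x \<pi> k = CARD('n) - k}"
  then have k: "k \<in> {1..CARD('n)}" by simp
  have "alpha A x \<pi> k = CARD('n) - k" using kk by simp
  then have eq: "card {j\<in>{1..CARD('n)}. x$(\<pi> k) - x$(\<pi> j) > a1} = CARD('n) - k"
    using alpha_k[of k] k by simp
  show "k \<in> K"
  proof (cases "k = CARD('n)")
    case True then show ?thesis using k unfolding K_def by simp
  next
    case False
    have "card {Suc k..CARD('n)} = CARD('n) - k" by simp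
    then have seq: "{j\<in>{1..CARD('n)}. x$(\<pi> k) - x$(\<pi> j) > a1} = {Suc k..CARD('n)}"
      using eq by (intro card_subset_eq[OF finite_atLeastAtMost alpha_sub[OF k]]) simp
    have "Suc k \<in> {Suc k..CARD('n)}" using False k by simp
    then have "Suc k \<in> {j\<in>{1..CARD('n)}. x$(\<pi> k) - x$(\<pi> j) > a1}" by (simp only: seq)
    then have gap: "x$(\<pi> k) - x$(\<pi> (Suc k)) > a1" by simp
    show ?thesis unfolding K_def using k gap by simp
  qed
next
  fix k assume kK: "k \<in> K"
  then have k: "k \<in> {1..CARD('n)}" using K_sub by blast
  have "{j\<in>{1..CARD('n)}. x$(\<pi> k) - x$(\<pi> j) > a1} = {Suc k..CARD('n)}"
  proof (cases "k = CARD('n)")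
    case True
    then have "{Suc k..CARD('n)} = {}" by simp
    then show ?thesis using alpha_sub[OF k] by blast
  next
    case False
    then have gap: "x$(\<pi> k) - x$(\<pi> (Suc k)) > a1" using kK unfolding K_def by simp
    have "{Suc k..CARD('n)} \<subseteq> {j\<in>{1..CARD('n)}. x$(\<pi> k) - x$(\<pi> j) > a1}"
    proof
      fix j assume j: "j \<in> {Suc k..CARD('n)}"
      have j1: "Suc k \<in> {1..CARD('n)}" "j \<in> {1..CARD('n)}" "Suc k \<le> j" using j by simp_all
      have "x$(\<pi> j) \<le> x$(\<pi> (Suc k))" using sorted[OF j1] .
      then have "x$(\<pi> k) - x$(\<pi> j) > a1" using gap by linarith
      then show "j \<in> {j\<in>{1..CARD('n)}. x$(\<pi> k) - x$(\<pi> j) > a1}" using j1 by simp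
    qed
    then show ?thesis using alpha_sub[OF k] by (rule subset_antisym[rotated])
  qed
  then have "alpha A x \<pi> k = CARD('n) - k" using alpha_k[of k] k by simp
  then show "k \<in> {k\<in>{1..CARD('n)}. alpha A x \<pi> k = CARD('n) - k}" using k by simp
qed

end

theorem theorem3p5:
  fixes A :: "real set" and \<Omega> :: "(real, 'n::{finite,linorder}) vec set"
    and x :: "(real, 'n) vec" and \<pi> :: "nat \<Rightarrow> 'n"
  assumes "finite A" and "A \<noteq> {}" and "\<forall>a\<in>A. a > 0"
    and "\<Omega> \<in> regions_CA A"
    and "x \<in> \<Omega>"
    and "is_assoc_perm x \<pi>"
  shows "level \<Omega> = prime_components CARD('n) (D1 A x \<pi>)"
proof -
  interpret reg_setup A \<Omega> x \<pi> using assms by unfold_locales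
  have "prime_components CARD('n) (D1 A x \<pi>) = card {k\<in>{1..CARD('n)}. alpha A x \<pi> k = CARD('n) - k}"
    unfolding D1_def using alpha_bnd alpha_mono by (intro prime_components_char) (auto simp: alpha_def[of _ _ _ 0])
  then show ?thesis using level_eq alpha_K by simp
qed

end
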